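(* Let $\sigma\in\mathrm{NC}_n$ and $1\le i<n$. Then $i$ is a noncrossing descent of $\sigma$ if and only if $i$ is the minimal element of its cycle of $\sigma$ and $i+1$ is not the minimal element of its cycle. In particular, for every $\sigma\in\mathrm{NC}_n\setminus\{\mathrm{id}\}$, $\sigma$ has at least one noncrossing descent.
   Context: A set partition of $[n]$ is noncrossing if there are no distinct blocks $P,Q$ with $a,b\in P$, $c,d\in Q$, $a<c<b<d$. To a noncrossing partition associate $\sigma\in S_n$ acting on each block $\{a_1<\dots<a_p\}$ by $\sigma(a_j)=a_{j-1}$ ($j\ge2$), $\sigma(a_1)=a_p$; $\mathrm{NC}_n$ is the set of these permutations, whose cycles (including fixed points) are the blocks. $s_i=(i,i+1)$, $\sigma s_i=\sigma\circ s_i$, $\ell$ is Coxeter length. $i$ is a noncrossing descent of $\sigma\in\mathrm{NC}_n$ if $\sigma s_i\in\mathrm{NC}_n$ and $\ell(\sigma s_i)<\ell(\sigma)$. *)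

theory Defs
  imports "HOL-Combinatorics.Combinatorics" "HOL-Library.Disjoint_Sets"
begin

text \<open>Permutations of [n] = {1..n} are functions nat => nat fixing everything outside {1..n}.\<close>

definition noncrossing :: "nat set set \<Rightarrow> bool" where
  "noncrossing P \<longleftrightarrow>
     (\<forall>B\<in>P. \<forall>C\<in>P. B \<noteq> C \<longrightarrow>
        \<not> (\<exists>a b c d. a \<in> B \<and> b \<in> B \<and> c \<in> C \<and> d \<in> C \<and> a < c \<and> c < b \<and> b < d))"

definition nc_perm :: "nat set set \<Rightarrow> nat \<Rightarrow> nat" where
  "nc_perm P a =
     (if \<exists>B\<in>P. a \<in> B then
        (let B = (THE B. B \<in> P \<and> a \<in> B) in
           if \<exists>b\<in>B. b < a then Max {b\<in>B. b < a} else Max B)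
      else a)"

definition NC :: "nat \<Rightarrow> (nat \<Rightarrow> nat) set" where
  "NC n = {nc_perm P | P. partition_on {1..n} P \<and> noncrossing P}"

definition s :: "nat \<Rightarrow> nat \<Rightarrow> nat" where
  "s i = transpose i (Suc i)"

text \<open>Coxeter length in S_n (w.r.t. adjacent transpositions) = number of inversions.\<close>
definition coxeter_length :: "nat \<Rightarrow> (nat \<Rightarrow> nat) \<Rightarrow> nat" where
  "coxeter_length n \<sigma> = card {(a, b). 1 \<le> a \<and> a < b \<and> b \<le> n \<and> \<sigma> b < \<sigma> a}"

definition nc_descent :: "nat \<Rightarrow> (nat \<Rightarrow> nat) \<Rightarrow> nat \<Rightarrow> bool" where
  "nc_descent n \<sigma> i \<longleftrightarrow>
     \<sigma> \<circ> s i \<in> NC n \<and> coxeter_length n (\<sigma> \<circ> s i) < coxeter_length n \<sigma>"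

definition cycle_of :: "(nat \<Rightarrow> nat) \<Rightarrow> nat \<Rightarrow> nat set" where
  "cycle_of \<sigma> x = {(\<sigma> ^^ k) x | k. True}"

end

theory Submission
  imports Defs
begin

definition good :: "nat set \<Rightarrow> nat \<Rightarrow> nat \<Rightarrow> bool" where
  "good D x y \<longleftrightarrow> y \<in> D \<and> ((y < x \<and> (\<forall>d\<in>D. d < x \<longrightarrow> d \<le> y)) \<or> (x \<le> y \<and> (\<forall>d\<in>D. x \<le> d \<and> d \<le> y)))"

lemma part_uniq:
  assumes "partition_on A P" "D \<in> P" "E \<in> P" "x \<in> D" "x \<in> E"
  shows "D = E"
  using assms unfolding partition_on_def disjoint_def by blast

lemma good_unique: "good D x y1 \<Longrightarrow> good D x y2 \<Longrightarrow> y1 = y2"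
  unfolding good_def by (meson antisym not_le)

lemma ncp_formula:
  assumes "partition_on A P" "D \<in> P" "x \<in> D"
  shows "nc_perm P x = (if \<exists>b\<in>D. b < x then Max {b\<in>D. b < x} else Max D)"
proof -
  have the: "(THE B. B \<in> P \<and> x \<in> B) = D"
  proof (rule the_equality)
    show "D \<in> P \<and> x \<in> D" using assms by simp
    fix B assume "B \<in> P \<and> x \<in> B"
    then show "B = D" using part_uniq[OF assms(1)] assms(2,3) by blast
  qed
  have ex: "\<exists>B\<in>P. x \<in> B" using assms by blast
  show ?thesis unfolding nc_perm_def Let_def the using ex by (simp only: if_True)
qed

lemma ncp_good:
  assumes "finite A" "partition_on A P" "D \<in> P" "x \<in> D"
  shows "good D x (nc_perm P x)"
proof -
  have "D \<subseteq> A" using assms(2,3) partition_onD1 by blast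
  then have fin: "finite D" using assms(1) finite_subset by blast
  show ?thesis
  proof (cases "\<exists>b\<in>D. b < x")
    case True
    have f2: "finite {b\<in>D. b < x}" using fin by simp
    have ne: "{b\<in>D. b < x} \<noteq> {}" using True by blast
    have "nc_perm P x = Max {b\<in>D. b < x}" using True ncp_formula[OF assms(2-4)] by simp
    moreover have "Max {b\<in>D. b < x} \<in> {b\<in>D. b < x}" using Max_in[OF f2 ne] .
    moreover have "\<forall>d\<in>D. d < x \<longrightarrow> d \<le> Max {b\<in>D. b < x}" using Max_ge[OF f2] by blast
    ultimately show ?thesis unfolding good_def by auto
  next
    case False
    have ne: "D \<noteq> {}" using assms by blast
    have "nc_perm P x = Max D" using False ncp_formula[OF assms(2-4)] by simp
    moreover have "Max D \<in> D" using Max_in[OF fin ne] .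
    moreover have "\<forall>d\<in>D. d \<le> Max D" using Max_ge[OF fin] by blast
    ultimately show ?thesis unfolding good_def using False assms(4) by (auto simp: not_less)
  qed
qed

lemma ncp_eqI:
  assumes "finite A" "partition_on A P" "D \<in> P" "x \<in> D" "good D x y"
  shows "nc_perm P x = y"
  using good_unique ncp_good[OF assms(1-4)] assms(5) by blast

lemma ncp_out:
  assumes "partition_on A P" "x \<notin> A"
  shows "nc_perm P x = x"
  using assms partition_onD1 unfolding nc_perm_def by auto

definition invs :: "nat \<Rightarrow> (nat \<Rightarrow> nat) \<Rightarrow> (nat \<times> nat) set" where
  "invs n \<sigma> = {(a, b). 1 \<le> a \<and> a < b \<and> b \<le> n \<and> \<sigma> b < \<sigma> a}"

lemma s_lt: "a < b \<Longrightarrow> (a, b) \<noteq> (i, Suc i) \<Longrightarrow> s i a < s i b"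
  unfolding s_def transpose_def by auto

lemma s_s[simp]: "s i (s i x) = x"
  unfolding s_def by simp

lemma s_range: "1 \<le> i \<Longrightarrow> i < n \<Longrightarrow> 1 \<le> a \<Longrightarrow> a \<le> n \<Longrightarrow> 1 \<le> s i a \<and> s i a \<le> n"
  unfolding s_def transpose_def by auto

lemma invs_img:
  assumes "1 \<le> i" "i < n"
  shows "map_prod (s i) (s i) ` (invs n \<sigma> - {(i, Suc i)}) \<subseteq> invs n (\<sigma> \<circ> s i) - {(i, Suc i)}"
proof
  fix p assume "p \<in> map_prod (s i) (s i) ` (invs n \<sigma> - {(i, Suc i)})"
  then obtain a b where ab: "(a,b) \<in> invs n \<sigma>" "(a,b) \<noteq> (i, Suc i)" and p: "p = (s i a, s i b)" by auto
  have "s i a < s i b" using ab s_lt unfolding invs_def by auto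
  moreover have "(s i a, s i b) \<noteq> (i, Suc i)"
    using ab unfolding s_def transpose_def invs_def by (auto split: if_splits)
  moreover have "1 \<le> s i a" "s i b \<le> n" using s_range[OF assms] ab(1) unfolding invs_def by auto
  ultimately show "p \<in> invs n (\<sigma> \<circ> s i) - {(i, Suc i)}" using ab(1) p unfolding invs_def by auto
qed

lemma invs_fin: "finite (invs n \<sigma>)"
  by (rule finite_subset[of _ "{1..n} \<times> {1..n}"]) (auto simp: invs_def)

lemma inj_ms: "inj_on (map_prod (s i) (s i)) X"
proof (rule inj_onI)
  fix p q :: "nat \<times> nat"
  have si: "s i a = s i b \<longleftrightarrow> a = b" for a b by (metis s_s)
  assume "map_prod (s i) (s i) p = map_prod (s i) (s i) q"
  then show "p = q" by (cases p; cases q) (simp add: si)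
qed

lemma invs_card:
  assumes "1 \<le> i" "i < n"
  shows "card (invs n (\<sigma> \<circ> s i) - {(i, Suc i)}) = card (invs n \<sigma> - {(i, Suc i)})"
proof -
  have c1: "card (invs n \<sigma> - {(i, Suc i)}) \<le> card (invs n (\<sigma> \<circ> s i) - {(i, Suc i)})"
    using card_inj_on_le[OF inj_ms invs_img[OF assms]] invs_fin by blast
  have "\<sigma> \<circ> s i \<circ> s i = \<sigma>" by (rule ext) simp
  then have c2: "card (invs n (\<sigma> \<circ> s i) - {(i, Suc i)}) \<le> card (invs n \<sigma> - {(i, Suc i)})"
    using card_inj_on_le[OF inj_ms invs_img[OF assms, of "\<sigma> \<circ> s i"]] invs_fin by simp
  show ?thesis using c1 c2 by simp
qed

lemma len_iff:
  assumes "1 \<le> i" "i < n"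
  shows "coxeter_length n (\<sigma> \<circ> s i) < coxeter_length n \<sigma> \<longleftrightarrow> \<sigma> (Suc i) < \<sigma> i"
proof -
  have cl: "coxeter_length n \<tau> = card (invs n \<tau>)" for \<tau> unfolding coxeter_length_def invs_def ..
  have split: "card (invs n \<tau>) = card (invs n \<tau> - {(i, Suc i)}) + (if (i, Suc i) \<in> invs n \<tau> then 1 else 0)" for \<tau>
  proof (cases "(i, Suc i) \<in> invs n \<tau>")
    case True then show ?thesis using card_Suc_Diff1[OF invs_fin True] by simp
  next
    case False then show ?thesis by simp
  qed
  have m1: "(i, Suc i) \<in> invs n (\<sigma> \<circ> s i) \<longleftrightarrow> \<sigma> i < \<sigma> (Suc i)"
    using assms unfolding invs_def s_def by simp
  have m2: "(i, Suc i) \<in> invs n \<sigma> \<longleftrightarrow> \<sigma> (Suc i) < \<sigma> i"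
    using assms unfolding invs_def by simp
  have e1: "card (invs n (\<sigma> \<circ> s i)) = card (invs n \<sigma> - {(i, Suc i)}) + (if \<sigma> i < \<sigma> (Suc i) then 1 else 0)"
    using split[of "\<sigma> \<circ> s i"] m1 invs_card[OF assms, of \<sigma>] by presburger
  have e2: "card (invs n \<sigma>) = card (invs n \<sigma> - {(i, Suc i)}) + (if \<sigma> (Suc i) < \<sigma> i then 1 else 0)"
    using split[of \<sigma>] m2 by presburger
  show ?thesis unfolding cl e1 e2 by auto
qed

lemma blk: "partition_on A P \<Longrightarrow> x \<in> A \<Longrightarrow> \<exists>D\<in>P. x \<in> D"
  using partition_onD1 by blast

lemma blk_sub: "partition_on A P \<Longrightarrow> D \<in> P \<Longrightarrow> D \<subseteq> A"
  using partition_onD1 by blast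

lemma nc_apply:
  assumes "noncrossing P" "X \<in> P" "Y \<in> P" "X \<noteq> Y" "a \<in> X" "b \<in> X" "c \<in> Y" "d \<in> Y"
    "a < c" "c < b" "b < d"
  shows False
proof -
  have "\<not> (\<exists>a b c d. a \<in> X \<and> b \<in> X \<and> c \<in> Y \<and> d \<in> Y \<and> a < c \<and> c < b \<and> b < d)"
    using assms(1)[unfolded noncrossing_def, rule_format, OF assms(2,3,4)] .
  moreover have "\<exists>a b c d. a \<in> X \<and> b \<in> X \<and> c \<in> Y \<and> d \<in> Y \<and> a < c \<and> c < b \<and> b < d"
    using assms(5-) by (intro exI conjI)
  ultimately show False by contradiction
qed

lemma nc_local:
  assumes "\<tau> \<in> NC n" "1 \<le> i" "i < n"
  shows "\<not>(\<tau> i < \<tau> (Suc i) \<and> \<tau> (Suc i) < i)" "\<not>(i < \<tau> i \<and> \<tau> i < \<tau> (Suc i))"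
proof -
  obtain Q where Q: "partition_on {1..n} Q" "noncrossing Q" "\<tau> = nc_perm Q"
    using assms(1) unfolding NC_def by blast
  obtain E where E: "E \<in> Q" "i \<in> E" using blk[OF Q(1), of i] blk[OF Q(1), of "Suc i"] assms by auto
  obtain D where D: "D \<in> Q" "Suc i \<in> D" using blk[OF Q(1), of i] blk[OF Q(1), of "Suc i"] assms by auto
  have gE: "good E i (\<tau> i)" using ncp_good[OF _ Q(1) E] Q(3) by simp
  have gD: "good D (Suc i) (\<tau> (Suc i))" using ncp_good[OF _ Q(1) D] Q(3) by simp
  show "\<not>(\<tau> i < \<tau> (Suc i) \<and> \<tau> (Suc i) < i)"
  proof
    assume h: "\<tau> i < \<tau> (Suc i) \<and> \<tau> (Suc i) < i"
    have e1: "\<tau> i \<in> E" using gE unfolding good_def by auto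
    have d1: "\<tau> (Suc i) \<in> D" "\<forall>d\<in>D. d < Suc i \<longrightarrow> d \<le> \<tau> (Suc i)" using gD h unfolding good_def by auto
    have "D \<noteq> E" using d1 E h by force
    then show False using nc_apply[OF Q(2) E(1) D(1) _ e1 E(2) d1(1) D(2)] h by auto
  qed
  show "\<not>(i < \<tau> i \<and> \<tau> i < \<tau> (Suc i))"
  proof
    assume h: "i < \<tau> i \<and> \<tau> i < \<tau> (Suc i)"
    have e1: "\<tau> i \<in> E" "\<forall>d\<in>E. d \<le> \<tau> i" using gE h unfolding good_def by auto
    have d1: "\<tau> (Suc i) \<in> D" using gD unfolding good_def by auto
    have "D \<noteq> E" using d1 e1 h by force
    moreover have "\<tau> i \<noteq> Suc i" using part_uniq[OF Q(1) D(1) E(1) D(2)] e1 \<open>D \<noteq> E\<close> by auto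
    ultimately show False using nc_apply[OF Q(2) E(1) D(1) _ E(2) e1(1) D(2) d1(1)] h
      by (metis Suc_lessI lessI)
  qed
qed

lemma cyc:
  assumes "partition_on {1..n} P" "x \<in> {1..n}"
  shows "x = Min (cycle_of (nc_perm P) x) \<longleftrightarrow> \<not> nc_perm P x < x"
proof -
  obtain D where D: "D \<in> P" "x \<in> D" using blk[OF assms] by auto
  have cl: "\<forall>y\<in>D. nc_perm P y \<in> D" using ncp_good[OF _ assms(1) D(1)] unfolding good_def by auto
  have sub: "cycle_of (nc_perm P) x \<subseteq> D"
  proof
    fix z assume "z \<in> cycle_of (nc_perm P) x"
    then obtain k where z: "z = (nc_perm P ^^ k) x" unfolding cycle_of_def by auto
    have "(nc_perm P ^^ k) x \<in> D" by (induction k) (use D cl in auto)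
    then show "z \<in> D" using z by simp
  qed
  have fin: "finite (cycle_of (nc_perm P) x)"
    using finite_subset[OF sub] blk_sub[OF assms(1) D(1)] finite_subset by blast
  have x_in: "x \<in> cycle_of (nc_perm P) x" unfolding cycle_of_def by (auto intro: exI[of _ 0])
  have s_in: "nc_perm P x \<in> cycle_of (nc_perm P) x" unfolding cycle_of_def
    by (auto intro!: exI[of _ 1])
  have g: "good D x (nc_perm P x)" using ncp_good[OF _ assms(1) D] by simp
  show ?thesis
  proof
    assume "x = Min (cycle_of (nc_perm P) x)"
    then show "\<not> nc_perm P x < x" using Min_le[OF fin s_in] by auto
  next
    assume "\<not> nc_perm P x < x"
    then have "\<forall>d\<in>D. x \<le> d" using g unfolding good_def by auto
    then show "x = Min (cycle_of (nc_perm P) x)" using sub x_in fin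
      by (intro Min_eqI[symmetric]) auto
  qed
qed

lemma nc_refine:
  assumes "noncrossing P"
    "\<And>X Y. X \<in> Q \<Longrightarrow> Y \<in> Q \<Longrightarrow> X \<noteq> Y \<Longrightarrow>
       (\<exists>a. X = {a}) \<or> (\<exists>c. Y = {c}) \<or> (\<exists>X'\<in>P. \<exists>Y'\<in>P. X \<subseteq> X' \<and> Y \<subseteq> Y' \<and> X' \<noteq> Y')"
  shows "noncrossing Q"
  unfolding noncrossing_def
proof (intro ballI impI notI)
  fix X Y assume XY: "X \<in> Q" "Y \<in> Q" "X \<noteq> Y"
    and ex: "\<exists>a b c d. a \<in> X \<and> b \<in> X \<and> c \<in> Y \<and> d \<in> Y \<and> a < c \<and> c < b \<and> b < d"
  then obtain a b c d where abcd: "a \<in> X" "b \<in> X" "c \<in> Y" "d \<in> Y" "a < c" "c < b" "b < d" by blast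
  from assms(2)[OF XY] show False
  proof (elim disjE)
    assume "\<exists>a. X = {a}" then show False using abcd by auto
  next
    assume "\<exists>a. Y = {a}" then show False using abcd by auto
  next
    assume "\<exists>X'\<in>P. \<exists>Y'\<in>P. X \<subseteq> X' \<and> Y \<subseteq> Y' \<and> X' \<noteq> Y'"
    then obtain X' Y' where "X' \<in> P" "Y' \<in> P" "X \<subseteq> X'" "Y \<subseteq> Y'" "X' \<noteq> Y'" by blast
    then show False using nc_apply[OF assms(1), of X' Y' a b c d] abcd by blast
  qed
qed

lemma fwd:
  assumes P: "partition_on {1..n} P" "noncrossing P" and i: "1 \<le> i" "i < n"
    and h1: "\<not> nc_perm P i < i" and h2: "nc_perm P (Suc i) < Suc i"
  shows "nc_perm P \<circ> s i \<in> NC n \<and> nc_perm P (Suc i) < nc_perm P i"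
proof -
  define \<sigma> where "\<sigma> = nc_perm P"
  have fin: "finite {1..n::nat}" by simp
  obtain B where B: "B \<in> P" "i \<in> B" using blk[OF P(1), of i] i by auto
  obtain C where C: "C \<in> P" "Suc i \<in> C" using blk[OF P(1), of "Suc i"] i by auto
  have gen: "good D x (\<sigma> x)" if "D \<in> P" "x \<in> D" for D x
    using ncp_good[OF fin P(1) that] \<sigma>_def by simp
  have pu: "D = E" if "D \<in> P" "E \<in> P" "x \<in> D" "x \<in> E" for D E x
    using part_uniq[OF P(1)] that by blast
  have ne: "{} \<notin> P" using P(1) partition_onD3 by blast
  have un: "\<Union>P = {1..n}" using P(1) partition_onD1 by blast
  have gB: "\<sigma> i \<in> B" "\<forall>b\<in>B. i \<le> b \<and> b \<le> \<sigma> i"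
    using gen[OF B] h1 unfolding good_def \<sigma>_def by auto
  have gC: "\<sigma> (Suc i) \<in> C" "\<forall>c\<in>C. c < Suc i \<longrightarrow> c \<le> \<sigma> (Suc i)"
    using gen[OF C] h2 unfolding good_def \<sigma>_def by auto
  have h2': "\<sigma> (Suc i) < Suc i" using h2 \<sigma>_def by simp
  have lt: "\<sigma> (Suc i) < \<sigma> i"
  proof (rule ccontr)
    assume "\<not> \<sigma> (Suc i) < \<sigma> i"
    then have "\<sigma> (Suc i) = i" "\<sigma> i = i" using gB B h2' by force+
    then have "B = C" using pu[OF B(1) C(1) B(2)] gC(1) by simp
    then show False using gB C(2) \<open>\<sigma> i = i\<close> by force
  qed
  have sx: "s i x = x" if "x \<noteq> i" "x \<noteq> Suc i" for x using that unfolding s_def by simp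
  have si: "s i i = Suc i" "s i (Suc i) = i" unfolding s_def by auto
  have NCm: "\<sigma> \<circ> s i \<in> NC n"
  proof (cases "B = C")
    case True
    have c0: "\<sigma> (Suc i) = i" using gC B True h2' by force
    define Q where "Q = insert {i} (insert (B - {i}) (P - {B}))"
    have pQ: "partition_on {1..n} Q"
    proof (rule partition_onI)
      show "\<Union>Q = {1..n}" unfolding Q_def using un B by blast
      show "{} \<notin> Q" unfolding Q_def using ne C True by auto
      fix p q assume "p \<in> Q" "q \<in> Q" "p \<noteq> q"
      then show "disjnt p q" unfolding Q_def disjnt_def using pu B by (auto; blast)
    qed
    have nQ: "noncrossing Q"
    proof (rule nc_refine[OF P(2)])
      fix X Y assume "X \<in> Q" "Y \<in> Q" "X \<noteq> Y"
      then show "(\<exists>a. X = {a}) \<or> (\<exists>c. Y = {c}) \<or> (\<exists>X'\<in>P. \<exists>Y'\<in>P. X \<subseteq> X' \<and> Y \<subseteq> Y' \<and> X' \<noteq> Y')"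
        unfolding Q_def using B by auto
    qed
    have "nc_perm Q x = (\<sigma> \<circ> s i) x" for x
    proof (cases "x \<in> {1..n}")
      case False
      then have "x \<noteq> i" "x \<noteq> Suc i" using i by auto
      then show ?thesis using ncp_out[OF pQ False] ncp_out[OF P(1) False] sx \<sigma>_def by simp
    next
      case xin: True
      then obtain D where D: "D \<in> P" "x \<in> D" using blk[OF P(1)] by blast
      show ?thesis
      proof (cases "D = B")
        case DB: True
        show ?thesis
        proof (cases "x = i")
          case True
          have "good {i} i i" unfolding good_def by simp
          then show ?thesis using ncp_eqI[OF fin pQ, of "{i}" i i] True si c0 unfolding Q_def by simp
        next
          case xi: False
          show ?thesis
          proof (cases "x = Suc i")
            case True
            have "good (B - {i}) (Suc i) (\<sigma> i)" using gB C True unfolding good_def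
              by (auto simp: \<open>B = C\<close>[symmetric])
            then show ?thesis using ncp_eqI[OF fin pQ, of "B - {i}" "Suc i" "\<sigma> i"] True si C \<open>B = C\<close>
              unfolding Q_def by simp
          next
            case False
            have xg: "Suc i < x" using gB D DB xi False by force
            have g: "good B x (\<sigma> x)" using gen D DB by simp
            have g1: "\<sigma> x \<in> B" "\<sigma> x < x" "\<forall>d\<in>B. d < x \<longrightarrow> d \<le> \<sigma> x"
              using g xg B(2) unfolding good_def by auto
            have "Suc i \<le> \<sigma> x" using g1(3) C(2) \<open>B = C\<close> xg by auto
            then have "good (B - {i}) x (\<sigma> x)" using g1 unfolding good_def by auto
            then show ?thesis using ncp_eqI[OF fin pQ, of "B - {i}" x "\<sigma> x"] sx[OF xi False] D DB xi
              unfolding Q_def by simp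
          qed
        qed
      next
        case False
        have "x \<noteq> i" "x \<noteq> Suc i" using pu D B C False \<open>B = C\<close> by blast+
        moreover have "D \<in> Q" using D False unfolding Q_def by simp
        ultimately show ?thesis using ncp_eqI[OF fin pQ _ D(2) gen[OF D]] sx by simp
      qed
    qed
    then have "nc_perm Q = \<sigma> \<circ> s i" by (rule ext)
    then show ?thesis unfolding NC_def mem_Collect_eq using pQ nQ by (intro exI[of _ Q]) simp
  next
    case BC: False
    have c0C: "\<sigma> (Suc i) \<in> C" using gC by simp
    have c0i: "\<sigma> (Suc i) < i"
    proof -
      have "\<sigma> (Suc i) \<noteq> i" using pu[OF B(1) C(1) B(2)] c0C BC by auto
      then show ?thesis using h2' by simp
    qed
    have Bi: "B = {i}"
    proof (rule ccontr)
      assume "B \<noteq> {i}"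
      then obtain b where b: "b \<in> B" "b \<noteq> i" using B by blast
      have "b \<noteq> Suc i" using pu[OF B(1) C(1)] b C BC by blast
      then have "Suc i < b" using gB b by force
      then show False using nc_apply[OF P(2) C(1) B(1) _ c0C C(2) B(2) b(1)] BC c0i by auto
    qed
    have si_i: "\<sigma> i = i" using gB Bi by simp
    define E where "E = insert i C"
    define Q where "Q = insert E (P - {B, C})"
    have iC: "i \<notin> C" using pu[OF B(1) C(1) B(2)] BC by blast
    have pQ: "partition_on {1..n} Q"
    proof (rule partition_onI)
      show "\<Union>Q = {1..n}" unfolding Q_def E_def using un B C Bi by blast
      show "{} \<notin> Q" unfolding Q_def E_def using ne by auto
      fix p q assume "p \<in> Q" "q \<in> Q" "p \<noteq> q"
      then show "disjnt p q" unfolding Q_def E_def disjnt_def using pu B C Bi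
        by (auto; blast)
    qed
    have noY: "\<not> (a < c \<and> c < b \<and> b < d)"
      if Y: "Y \<in> P" "Y \<noteq> B" "Y \<noteq> C" and
        cs: "(a \<in> E \<and> b \<in> E \<and> c \<in> Y \<and> d \<in> Y) \<or> (a \<in> Y \<and> b \<in> Y \<and> c \<in> E \<and> d \<in> E)" for Y a b c d
    proof
      assume o: "a < c \<and> c < b \<and> b < d"
      have iY: "i \<notin> Y" "Suc i \<notin> Y" using pu[OF Y(1) B(1)] pu[OF Y(1) C(1)] Y B C by blast+
      have CY: "\<not> (a' \<in> C \<and> b' \<in> C \<and> c' \<in> Y \<and> d' \<in> Y \<and> a' < c' \<and> c' < b' \<and> b' < d')"
        "\<not> (a' \<in> Y \<and> b' \<in> Y \<and> c' \<in> C \<and> d' \<in> C \<and> a' < c' \<and> c' < b' \<and> b' < d')" for a' b' c' d'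
        using nc_apply[OF P(2) C(1) Y(1), of a' b' c' d'] nc_apply[OF P(2) Y(1) C(1), of a' b' c' d'] Y(3) by auto
      from cs show False
      proof
        assume h: "a \<in> E \<and> b \<in> E \<and> c \<in> Y \<and> d \<in> Y"
        have "c \<noteq> Suc i" "d \<noteq> Suc i" "c \<noteq> i" "d \<noteq> i" using iY h by auto
        then have ne: "c \<noteq> Suc i" "d \<noteq> Suc i" "c \<noteq> i" "d \<noteq> i" .
        have aE: "a = i \<or> a \<in> C" "b = i \<or> b \<in> C" using h unfolding E_def by auto
        show False
        proof (cases "a = i")
          case True
          then have "b \<in> C" using aE o by auto
          moreover have "Suc i < c" using True o ne by auto
          ultimately show False using CY(1)[of "Suc i" b c d] C(2) h o by auto
        next
          case False
          then have aC: "a \<in> C" using aE by auto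
          show False
          proof (cases "b = i")
            case True
            have "Suc i < d" using True o ne by auto
            then show False using CY(1)[of a "Suc i" c d] C(2) aC h o True by auto
          next
            case False
            then show False using CY(1)[of a b c d] aC aE h o by auto
          qed
        qed
      next
        assume h: "a \<in> Y \<and> b \<in> Y \<and> c \<in> E \<and> d \<in> E"
        have "a \<noteq> Suc i" "b \<noteq> Suc i" "a \<noteq> i" "b \<noteq> i" using iY h by auto
        then have ne: "a \<noteq> Suc i" "b \<noteq> Suc i" "a \<noteq> i" "b \<noteq> i" .
        have cE: "c = i \<or> c \<in> C" "d = i \<or> d \<in> C" using h unfolding E_def by auto
        show False
        proof (cases "c = i")
          case True
          then have "d \<in> C" using cE o by auto
          moreover have "Suc i < b" using True o ne by auto
          ultimately show False using CY(2)[of a b "Suc i" d] C(2) h o True by auto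
        next
          case False
          then have cC: "c \<in> C" using cE by auto
          show False
          proof (cases "d = i")
            case True
            then show False using CY(2)[of a b c "Suc i"] C(2) cC h o by auto
          next
            case False
            then show False using CY(2)[of a b c d] cC cE h o by auto
          qed
        qed
      qed
    qed
    have nQ: "noncrossing Q"
      unfolding noncrossing_def
    proof (intro ballI impI notI)
      fix X Y assume XY: "X \<in> Q" "Y \<in> Q" "X \<noteq> Y"
        and ex: "\<exists>a b c d. a \<in> X \<and> b \<in> X \<and> c \<in> Y \<and> d \<in> Y \<and> a < c \<and> c < b \<and> b < d"
      then obtain a b c d where abcd: "a \<in> X" "b \<in> X" "c \<in> Y" "d \<in> Y" "a < c" "c < b" "b < d" by blast
      consider "X = E" "Y \<in> P - {B, C}" | "Y = E" "X \<in> P - {B, C}" | "X \<in> P - {B, C}" "Y \<in> P - {B, C}"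
        using XY unfolding Q_def by auto
      then show False
      proof cases
        case 1 then show ?thesis using noY[of Y a b c d] abcd by auto
      next
        case 2 then show ?thesis using noY[of X a b c d] abcd by auto
      next
        case 3 then show ?thesis using nc_apply[OF P(2), of X Y a b c d] XY abcd by blast
      qed
    qed
    have EQ: "E \<in> Q" unfolding Q_def by simp
    have "nc_perm Q x = (\<sigma> \<circ> s i) x" for x
    proof (cases "x \<in> {1..n}")
      case False
      then have "x \<noteq> i" "x \<noteq> Suc i" using i by auto
      then show ?thesis using ncp_out[OF pQ False] ncp_out[OF P(1) False] sx \<sigma>_def by simp
    next
      case xin: True
      then obtain D where D: "D \<in> P" "x \<in> D" using blk[OF P(1)] by blast
      show ?thesis
      proof (cases "x = i")
        case True
        have "good E i (\<sigma> (Suc i))" using c0C c0i gC unfolding good_def E_def by auto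
        then show ?thesis using ncp_eqI[OF fin pQ EQ, of i] True si unfolding E_def by simp
      next
        case xi: False
        show ?thesis
        proof (cases "x = Suc i")
          case True
          have "good E (Suc i) i" unfolding good_def E_def by auto
          then show ?thesis using ncp_eqI[OF fin pQ EQ, of "Suc i"] True si si_i C unfolding E_def by simp
        next
          case xsi: False
          show ?thesis
          proof (cases "D = C")
            case True
            have g: "good C x (\<sigma> x)" using gen D True by simp
            have xc: "x < i \<or> Suc i < x" using xi xsi by auto
            have "good E x (\<sigma> x)"
            proof -
              have m: "\<sigma> x \<in> C" using g unfolding good_def by simp
              from g have "(\<sigma> x < x \<and> (\<forall>d\<in>C. d < x \<longrightarrow> d \<le> \<sigma> x)) \<or> (x \<le> \<sigma> x \<and> (\<forall>d\<in>C. x \<le> d \<and> d \<le> \<sigma> x))"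
                unfolding good_def by simp
              then show ?thesis
              proof
                assume a: "\<sigma> x < x \<and> (\<forall>d\<in>C. d < x \<longrightarrow> d \<le> \<sigma> x)"
                show ?thesis
                proof (cases "x < i")
                  case True then show ?thesis using a m unfolding good_def E_def by auto
                next
                  case False
                  then have "Suc i < x" using xc by simp
                  then have "Suc i \<le> \<sigma> x" using a C(2) by blast
                  then show ?thesis using a m unfolding good_def E_def by auto
                qed
              next
                assume a: "x \<le> \<sigma> x \<and> (\<forall>d\<in>C. x \<le> d \<and> d \<le> \<sigma> x)"
                have "x \<le> \<sigma> (Suc i)" "Suc i \<le> \<sigma> x" using a c0C C(2) by auto
                then show ?thesis using a m c0i unfolding good_def E_def by auto
              qed
            qed
            then show ?thesis using ncp_eqI[OF fin pQ EQ, of x] sx[OF xi xsi] D True unfolding E_def by simp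
          next
            case False
            have "D \<noteq> B" using D Bi xi by auto
            then have "D \<in> Q" using D False unfolding Q_def by simp
            then show ?thesis using ncp_eqI[OF fin pQ _ D(2) gen[OF D]] sx[OF xi xsi] by simp
          qed
        qed
      qed
    qed
    then have "nc_perm Q = \<sigma> \<circ> s i" by (rule ext)
    then show ?thesis unfolding NC_def mem_Collect_eq using pQ nQ by (intro exI[of _ Q]) simp
  qed
  show ?thesis using NCm lt \<sigma>_def by simp
qed

theorem proposition7p7:
  fixes n :: nat and \<sigma> :: "nat \<Rightarrow> nat"
  assumes "\<sigma> \<in> NC n"
  shows "(\<forall>i. 1 \<le> i \<and> i < n \<longrightarrow>
            (nc_descent n \<sigma> i \<longleftrightarrow>
               i = Min (cycle_of \<sigma> i) \<and> Suc i \<noteq> Min (cycle_of \<sigma> (Suc i))))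
         \<and> (\<sigma> \<noteq> id \<longrightarrow> (\<exists>i. 1 \<le> i \<and> i < n \<and> nc_descent n \<sigma> i))"
proof -
  obtain P where P: "partition_on {1..n} P" "noncrossing P" "\<sigma> = nc_perm P"
    using assms(1) unfolding NC_def by blast
  have part1: "nc_descent n \<sigma> i \<longleftrightarrow> \<not> \<sigma> i < i \<and> \<sigma> (Suc i) < Suc i" if i: "1 \<le> i" "i < n" for i
  proof
    assume d: "nc_descent n \<sigma> i"
    then have inn: "\<sigma> \<circ> s i \<in> NC n" and lt: "\<sigma> (Suc i) < \<sigma> i"
      unfolding nc_descent_def using len_iff[OF i] by auto
    have t1: "(\<sigma> \<circ> s i) i = \<sigma> (Suc i)" "(\<sigma> \<circ> s i) (Suc i) = \<sigma> i" unfolding s_def by auto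
    show "\<not> \<sigma> i < i \<and> \<sigma> (Suc i) < Suc i"
      using nc_local[OF inn i] t1 lt by auto
  next
    assume "\<not> \<sigma> i < i \<and> \<sigma> (Suc i) < Suc i"
    then show "nc_descent n \<sigma> i" using fwd[OF P(1,2) i] P(3) len_iff[OF i]
      unfolding nc_descent_def by auto
  qed
  have A: "\<forall>i. 1 \<le> i \<and> i < n \<longrightarrow>
            (nc_descent n \<sigma> i \<longleftrightarrow>
               i = Min (cycle_of \<sigma> i) \<and> Suc i \<noteq> Min (cycle_of \<sigma> (Suc i)))"
  proof (intro allI impI)
    fix i assume i: "1 \<le> i \<and> i < n"
    show "nc_descent n \<sigma> i \<longleftrightarrow> i = Min (cycle_of \<sigma> i) \<and> Suc i \<noteq> Min (cycle_of \<sigma> (Suc i))"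
      using part1[of i] i cyc[OF P(1), of i] cyc[OF P(1), of "Suc i"] P(3) by auto
  qed
  have range: "\<sigma> x \<in> {1..n}" if xr: "x \<in> {1..n}" for x
  proof -
    obtain D where D: "D \<in> P" "x \<in> D" using blk[OF P(1) xr] by auto
    show ?thesis using ncp_good[OF _ P(1) D] blk_sub[OF P(1) D(1)] P(3) unfolding good_def by auto
  qed
  have B: "\<exists>i. 1 \<le> i \<and> i < n \<and> nc_descent n \<sigma> i" if ne: "\<sigma> \<noteq> id"
  proof -
    have "\<exists>y. y \<in> {1..n} \<and> \<sigma> y < y"
    proof -
      obtain x where x: "\<sigma> x \<noteq> x" using ne by (metis eq_id_iff)
      have xin: "x \<in> {1..n}" using ncp_out[OF P(1)] x P(3) by auto
      show ?thesis
      proof (cases "\<sigma> x < x")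
        case True then show ?thesis using xin by blast
      next
        case False
        obtain D where D: "D \<in> P" "x \<in> D" using blk[OF P(1) xin] by auto
        have g: "good D x (\<sigma> x)" using ncp_good[OF _ P(1) D] P(3) by simp
        have g1: "\<sigma> x \<in> D" "\<forall>d\<in>D. x \<le> d \<and> d \<le> \<sigma> x" using g False unfolding good_def by auto
        have g2: "good D (\<sigma> x) (\<sigma> (\<sigma> x))" using ncp_good[OF _ P(1) D(1) g1(1)] P(3) by simp
        have "\<sigma> (\<sigma> x) < \<sigma> x" using g2 D(2) False x unfolding good_def by force
        then show ?thesis using range[OF xin] by blast
      qed
    qed
    then obtain y where y: "y \<in> {1..n}" "\<sigma> y < y" "\<And>z. z < y \<Longrightarrow> \<not> (z \<in> {1..n} \<and> \<sigma> z < z)"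
      using exists_least_iff[of "\<lambda>y. y \<in> {1..n} \<and> \<sigma> y < y"] by blast
    have "y \<noteq> 1" using range[of 1] y by auto
    then obtain i where yi: "y = Suc i" "1 \<le> i" using y(1) by (cases y) auto
    have "i < n" using y(1) yi by auto
    moreover have "\<not> \<sigma> i < i" using y(3)[of i] yi \<open>i < n\<close> by auto
    ultimately show ?thesis using part1[of i] yi y(2) by auto
  qed
  show ?thesis using A B by blast
qed

end
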